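(* Consider the asymmetric case with fixed $q<p$, and let $\alpha\in(0,1)$. The Galton–Watson process with one immigrant per generation and offspring law $D$ (transition $w\mapsto\sum_{i=0}^{w}\xi_i$, with $\xi_i$ i.i.d. $\sim D$) is positive recurrent. Its unique stationary distribution $\pi$ has probability generating function $\Psi(s)=\sum_{k\ge0}\pi(k)s^k$ satisfying $$\Psi(s)=\Psi(\phi(s))\,\phi(s),\qquad \phi(s)=E[s^D]=\frac{p}{1-qs}.$$ Moreover, for every fixed $M\ge1$, as $N\to\infty$: (i) $\eta_{[(1-\alpha)N]}$ converges in distribution to $\pi$, and the reversed segment $\big(\eta_{[(1-\alpha)N]-k}\big)_{k=0}^M$ converges in distribution to $(W_{-k})_{k=0}^M$, where $(W_j)_{j\in\mathbb Z}$ is the stationary version of the immigration chain above, with marginal law $\pi$; (ii) the forward segment $\big(\eta_{[(1-\alpha)N]+k}\big)_{k=0}^M$ converges in distribution to the first $M+1$ generations of a Galton–Watson process (without immigration) with offspring law $D$ and initial law $\pi$.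
   Context: Fix $0<q<p$ with $p+q=1$, and $N\ge2$. Let $D$ be a random variable with $P(D=n)=pq^n$ for $n\ge0$, so that $E[D]=q/p<1$. Fix $\alpha\in(0,1)$. Empty sums are $0$, and $[\cdot]$ is the integer part. Let $\{\xi_{j,i}\}_{i,j\ge0}$ be i.i.d. copies of $D$. Define $(\eta_j)_{0\le j\le N}$ by $\eta_0=0$ and - $\eta_{j+1}=\sum_{i=0}^{\eta_j}\xi_{j,i}$ for $0\le j<[(1-\alpha)N]$, - $\eta_{j+1}=\sum_{i=1}^{\eta_j}\xi_{j,i}$ for $[(1-\alpha)N]\le j\le N-1$. (This chain records the numbers of left-crossings of bonds, counted from the right endpoint, by the asymmetric walk on $\{0,\dots,N\}$ started at $[\alpha N]$.) *)

theory Defs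
  imports "HOL-Probability.Probability"
begin

text \<open>Law of the sum of k i.i.d. copies of D, where P(D = n) = p (1-p)^n
  (i.e. D ~ geometric_pmf p, with q = 1 - p).\<close>
fun iid_sum :: "real \<Rightarrow> nat \<Rightarrow> nat pmf" where
  "iid_sum p 0 = return_pmf 0"
| "iid_sum p (Suc k) = bind_pmf (geometric_pmf p) (\<lambda>x. map_pmf ((+) x) (iid_sum p k))"

definition imm_kernel :: "real \<Rightarrow> nat \<Rightarrow> nat pmf" where
  "imm_kernel p w = iid_sum p (Suc w)"

definition gw_kernel :: "real \<Rightarrow> nat \<Rightarrow> nat pmf" where
  "gw_kernel p w = iid_sum p w"

text \<open>Law of the path (X_0, ..., X_n) of a (possibly time-inhomogeneous) Markov chain
  with initial law init and transition kernel K j used for the step j -> j+1.\<close>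
fun chain_path :: "'a pmf \<Rightarrow> (nat \<Rightarrow> 'a \<Rightarrow> 'a pmf) \<Rightarrow> nat \<Rightarrow> 'a list pmf" where
  "chain_path init K 0 = map_pmf (\<lambda>x. [x]) init"
| "chain_path init K (Suc n) =
     bind_pmf (chain_path init K n) (\<lambda>xs. map_pmf (\<lambda>y. xs @ [y]) (K n (last xs)))"

text \<open>Law of (eta_0, ..., eta_n) for the chain of the paper (parameters p, alpha, N).
  Steps j < [(1-alpha)N] use the immigration kernel, later steps the GW kernel.\<close>
definition eta_path :: "real \<Rightarrow> real \<Rightarrow> nat \<Rightarrow> nat \<Rightarrow> nat list pmf" where
  "eta_path p \<alpha> N n = chain_path (return_pmf 0)
     (\<lambda>j. if j < nat \<lfloor>(1 - \<alpha>) * real N\<rfloor> then imm_kernel p else gw_kernel p) n"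

text \<open>avoid K x n w = P_w(X_1 \<noteq> x, ..., X_n \<noteq> x) for the homogeneous chain with kernel K.\<close>
fun avoid :: "('a \<Rightarrow> 'a pmf) \<Rightarrow> 'a \<Rightarrow> nat \<Rightarrow> 'a \<Rightarrow> real" where
  "avoid K x 0 w = 1"
| "avoid K x (Suc n) w = measure_pmf.expectation (K w) (\<lambda>y. if y = x then 0 else avoid K x n y)"

text \<open>Positive recurrence: every state has finite expected return time,
  E_x[T_x] = sum_{n \<ge> 0} P_x(T_x > n) < \<infinity>.\<close>
definition positive_recurrent :: "('a \<Rightarrow> 'a pmf) \<Rightarrow> bool" where
  "positive_recurrent K \<longleftrightarrow> (\<forall>x. summable (\<lambda>n. avoid K x n x))"

definition stationary :: "('a \<Rightarrow> 'a pmf) \<Rightarrow> 'a pmf \<Rightarrow> bool" where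
  "stationary K \<pi> \<longleftrightarrow> bind_pmf \<pi> K = \<pi>"

definition pgf :: "nat pmf \<Rightarrow> real \<Rightarrow> real" where
  "pgf \<mu> s = (\<Sum>k. pmf \<mu> k * s ^ k)"

text \<open>Convergence in distribution on a discrete (countable) space:
  E f(X_N) \<rightarrow> E f(X) for every bounded (hence continuous) f.\<close>
definition conv_distr :: "(nat \<Rightarrow> 'a pmf) \<Rightarrow> 'a pmf \<Rightarrow> bool" where
  "conv_distr X Y \<longleftrightarrow> (\<forall>f :: 'a \<Rightarrow> real. bounded (range f) \<longrightarrow>
     (\<lambda>N. measure_pmf.expectation (X N) f) \<longlonglongrightarrow> measure_pmf.expectation Y f)"

end

theory Submission
  imports Defs
begin

lemma bint:
  fixes f :: "'a \<Rightarrow> real"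
  assumes "\<And>x. \<bar>f x\<bar> \<le> B"
  shows "integrable (measure_pmf M) f"
  by (rule measure_pmf.integrable_const_bound[where B=B]) (use assms in auto)

lemma exp_bind_pmf:
  fixes h :: "'b \<Rightarrow> real"
  assumes "\<And>x. \<bar>h x\<bar> \<le> B"
  shows "measure_pmf.expectation (bind_pmf M N) h = measure_pmf.expectation M (\<lambda>x. measure_pmf.expectation (N x) h)"
  unfolding measure_pmf_bind
  apply (rule integral_bind[where K="count_space UNIV" and B=B and B'=1])
  using assms by (auto simp: measure_pmf.emeasure_space_1 measure_pmf_in_subprob_algebra intro!: measure_pmf.finite_measure)

lemma abs_exp_le:
  fixes f :: "'a \<Rightarrow> real"
  assumes "\<And>x. \<bar>f x\<bar> \<le> B"
  shows "\<bar>measure_pmf.expectation M f\<bar> \<le> B"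
proof -
  have "\<bar>measure_pmf.expectation M f\<bar> \<le> measure_pmf.expectation M (\<lambda>x. \<bar>f x\<bar>)"
    by (rule integral_abs_bound)
  also have "\<dots> \<le> B"
    by (rule measure_pmf.integral_le_const) (use assms bint[of "\<lambda>x. \<bar>f x\<bar>" B] in auto)
  finally show ?thesis .
qed

lemma iid_nb: "iid_sum p k = neg_binomial_pmf k p"
  by (induction k) (simp_all add: neg_binomial_pmf_Suc pair_pmf_def map_pmf_def bind_assoc_pmf bind_return_pmf)

lemma iid_add: "iid_sum p (a + b) = bind_pmf (iid_sum p a) (\<lambda>u. map_pmf ((+) u) (iid_sum p b))"
proof (induction a)
  case 0
  have "(+) (0::nat) = id" by auto
  then show ?case by (simp add: bind_return_pmf)
next
  case (Suc a)
  then show ?case by (simp add: map_pmf_def bind_assoc_pmf bind_return_pmf add.assoc)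
qed

primrec kit :: "('a \<Rightarrow> 'a pmf) \<Rightarrow> nat \<Rightarrow> 'a \<Rightarrow> 'a pmf" where
  "kit K 0 x = return_pmf x"
| "kit K (Suc n) x = bind_pmf (K x) (kit K n)"

lemma kit_fun: "kit K 0 = return_pmf" "kit K (Suc n) = (\<lambda>x. bind_pmf (K x) (kit K n))"
  by (auto simp: fun_eq_iff)

lemma kit_Suc': "kit K (Suc n) x = bind_pmf (kit K n x) K"
proof (induction n arbitrary: x)
  case 0 then show ?case by (simp add: kit_fun bind_return_pmf bind_return_pmf')
next
  case (Suc n)
  have e: "kit K (Suc n) = (\<lambda>y. bind_pmf (kit K n y) K)" using Suc.IH by (simp add: fun_eq_iff del: kit.simps)
  have "kit K (Suc (Suc n)) x = bind_pmf (K x) (\<lambda>y. bind_pmf (kit K n y) K)"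
    by (subst kit.simps(2)) (simp only: e)
  also have "\<dots> = bind_pmf (kit K (Suc n) x) K" by (simp add: bind_assoc_pmf)
  finally show ?case .
qed

lemma kit_stat: "bind_pmf \<pi> K = \<pi> \<Longrightarrow> bind_pmf \<pi> (kit K n) = \<pi>"
proof (induction n)
  case 0 then show ?case by (simp add: bind_return_pmf')
next
  case (Suc n)
  have "bind_pmf \<pi> (kit K (Suc n)) = bind_pmf \<pi> (\<lambda>a. bind_pmf (K a) (kit K n))"
    by (simp add: kit_fun)
  also have "\<dots> = bind_pmf (bind_pmf \<pi> K) (kit K n)"
    by (simp add: bind_assoc_pmf)
  also have "\<dots> = \<pi>" using Suc by (simp only:)
  finally show ?case .
qed

lemma kit_split:
  "kit (imm_kernel p) n (x + z) = bind_pmf (kit (imm_kernel p) n x) (\<lambda>a. map_pmf ((+) a) (kit (gw_kernel p) n z))"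
proof (induction n arbitrary: x z)
  case 0
  then show ?case by (simp add: bind_return_pmf)
next
  case (Suc n)
  let ?K = "imm_kernel p" and ?G = "gw_kernel p"
  have "kit ?K (Suc n) (x+z) = bind_pmf (?K (x+z)) (kit ?K n)" by simp
  also have "?K (x+z) = bind_pmf (?K x) (\<lambda>u. map_pmf ((+) u) (?G z))"
    unfolding imm_kernel_def gw_kernel_def using iid_add[of p "Suc x" z] by simp
  also have "bind_pmf (bind_pmf (?K x) (\<lambda>u. map_pmf ((+) u) (?G z))) (kit ?K n)
     = bind_pmf (?K x) (\<lambda>u. bind_pmf (?G z) (\<lambda>v. kit ?K n (u+v)))"
    by (simp add: bind_assoc_pmf bind_map_pmf)
  also have "\<dots> = bind_pmf (?K x) (\<lambda>u. bind_pmf (?G z) (\<lambda>v. bind_pmf (kit ?K n u) (\<lambda>a. map_pmf ((+) a) (kit ?G n v))))"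
    using Suc.IH by simp
  also have "\<dots> = bind_pmf (?K x) (\<lambda>u. bind_pmf (kit ?K n u) (\<lambda>a. bind_pmf (?G z) (\<lambda>v. map_pmf ((+) a) (kit ?G n v))))"
    apply (rule bind_pmf_cong[OF refl]) by (rule bind_commute_pmf)
  also have "\<dots> = bind_pmf (kit ?K (Suc n) x) (\<lambda>a. map_pmf ((+) a) (kit ?G (Suc n) z))"
    by (simp add: bind_assoc_pmf map_bind_pmf)
  finally show ?case .
qed

lemma exp_gw:
  assumes "0 < p" "p \<le> 1"
  shows "measure_pmf.expectation (gw_kernel p w) real = real w * (1-p)/p"
    and "integrable (measure_pmf (gw_kernel p w)) real"
  using expectation_neg_binomial_pmf[of p w] integrable_neg_binomial_pmf_real[of p w] assms
  by (auto simp: gw_kernel_def iid_nb)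

lemma gw_zero:
  assumes "0 < p" "p \<le> 1"
  shows "1 - pmf (kit (gw_kernel p) n z) 0 \<le> ((1-p)/p)^n * real z"
proof (induction n arbitrary: z)
  case 0
  then show ?case by (cases z) (auto simp: indicator_def)
next
  case (Suc n)
  let ?G = "gw_kernel p" and ?m = "(1-p)/p"
  have m0: "?m \<ge> 0" using assms by auto
  have int: "integrable (measure_pmf (?G z)) real" using exp_gw[OF assms] by auto
  have eq: "measure_pmf.expectation (?G z) (\<lambda>w. 1 - ?m^n * real w) = 1 - ?m^n * (real z * ?m)"
    using int exp_gw[OF assms, of z] by (simp add: integral_diff measure_pmf.prob_space)
  have le: "measure_pmf.expectation (?G z) (\<lambda>w. 1 - ?m^n * real w) \<le> measure_pmf.expectation (?G z) (\<lambda>w. pmf (kit ?G n w) 0)"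
    apply (rule integral_mono)
    using int apply simp
    apply (rule bint[where B=1]) apply (simp add: pmf_le_1)
    using Suc.IH by (simp add: algebra_simps)
  have "measure_pmf.expectation (?G z) (\<lambda>w. pmf (kit ?G n w) 0) = pmf (kit ?G (Suc n) z) 0" by (simp add: pmf_bind)
  moreover have "?m^(Suc n) * real z = ?m^n * (real z * ?m)" by (simp add: algebra_simps)
  ultimately show ?case using eq le by linarith
qed

lemma diff_bound:
  fixes f :: "nat \<Rightarrow> real" and Z :: "nat pmf"
  assumes f: "\<And>x. \<bar>f x\<bar> \<le> B"
  shows "\<bar>measure_pmf.expectation Z (\<lambda>b. f (a+b)) - f a\<bar> \<le> 2*B*(1 - pmf Z 0)"
proof -
  have i1: "integrable (measure_pmf Z) (\<lambda>b. f (a+b))" by (rule bint[where B=B]) (rule f)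
  have i2: "integrable (measure_pmf Z) (\<lambda>b. f a)" by (rule bint[where B=B]) (rule f)
  have "measure_pmf.expectation Z (\<lambda>b. f (a+b) - f a) = measure_pmf.expectation Z (\<lambda>b. f (a+b)) - measure_pmf.expectation Z (\<lambda>b. f a)"
    by (rule Bochner_Integration.integral_diff[OF i1 i2])
  also have "measure_pmf.expectation Z (\<lambda>b. f a) = f a" by (simp add: measure_pmf.prob_space)
  finally have e: "measure_pmf.expectation Z (\<lambda>b. f (a+b)) - f a = measure_pmf.expectation Z (\<lambda>b. f (a+b) - f a)" by simp
  have "\<bar>measure_pmf.expectation Z (\<lambda>b. f (a+b) - f a)\<bar> \<le> measure_pmf.expectation Z (\<lambda>b. \<bar>f (a+b) - f a\<bar>)"
    by (rule integral_abs_bound)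
  also have "\<dots> \<le> measure_pmf.expectation Z (\<lambda>b. 2*B * indicator (UNIV - {0}) b)"
  proof (rule integral_mono)
    show "integrable (measure_pmf Z) (\<lambda>b. \<bar>f (a+b) - f a\<bar>)"
    proof (rule bint[where B="2*B"])
      fix x show "\<bar>\<bar>f (a + x) - f a\<bar>\<bar> \<le> 2 * B" using f[of "a+x"] f[of a] by (simp add: abs_le_iff)
    qed
    have "0 \<le> B" using f[of 0] by auto
    then show "integrable (measure_pmf Z) (\<lambda>b. 2*B * indicator (UNIV - {0}) b)"
      by (intro bint[where B="2*B"]) (auto simp: indicator_def)
    fix b show "\<bar>f (a+b) - f a\<bar> \<le> 2*B * indicator (UNIV - {0}) b"
      using f[of "a+b"] f[of a] by (cases "b = 0") (auto simp: indicator_def)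
  qed
  also have "\<dots> = 2*B * measure_pmf.prob Z (UNIV - {0})" by simp
  also have "measure_pmf.prob Z (UNIV - {0}) = 1 - pmf Z 0"
    using measure_pmf.prob_compl[of "{0}" Z] by (simp add: measure_pmf_single)
  finally show ?thesis using e by simp
qed

lemma couple:
  fixes f :: "nat \<Rightarrow> real"
  assumes p: "0 < p" "p \<le> 1" and f: "\<And>x. \<bar>f x\<bar> \<le> B"
  shows "\<bar>measure_pmf.expectation (kit (imm_kernel p) n (x+z)) f - measure_pmf.expectation (kit (imm_kernel p) n x) f\<bar>
          \<le> 2*B*(((1-p)/p)^n * real z)"
proof -
  let ?A = "kit (imm_kernel p) n x" and ?Z = "kit (gw_kernel p) n z"
  have B0: "0 \<le> B" using f[of 0] by auto
  have 1: "measure_pmf.expectation (kit (imm_kernel p) n (x+z)) f = measure_pmf.expectation ?A (\<lambda>a. measure_pmf.expectation ?Z (\<lambda>b. f (a+b)))"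
    by (simp add: kit_split exp_bind_pmf[OF f])
  have 2: "measure_pmf.expectation ?A f = measure_pmf.expectation ?A (\<lambda>a. f a)" by simp
  have ia: "integrable (measure_pmf ?A) (\<lambda>a. measure_pmf.expectation ?Z (\<lambda>b. f (a+b)))"
    by (rule bint[where B=B]) (rule abs_exp_le, rule f)
  have ib: "integrable (measure_pmf ?A) (\<lambda>a. f a)" by (rule bint[where B=B]) (rule f)
  have "\<bar>measure_pmf.expectation ?A (\<lambda>a. measure_pmf.expectation ?Z (\<lambda>b. f (a+b))) - measure_pmf.expectation ?A (\<lambda>a. f a)\<bar>
     = \<bar>measure_pmf.expectation ?A (\<lambda>a. measure_pmf.expectation ?Z (\<lambda>b. f (a+b)) - f a)\<bar>"
    by (simp add: Bochner_Integration.integral_diff[OF ia ib])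
  also have "\<dots> \<le> 2*B*(1 - pmf ?Z 0)"
    by (rule abs_exp_le) (rule diff_bound, rule f)
  also have "\<dots> \<le> 2*B*(((1-p)/p)^n * real z)"
    using gw_zero[OF p, of n z] B0 by (intro mult_left_mono) auto
  finally show ?thesis using 1 by simp
qed

lemma conv_start:
  fixes f :: "nat \<Rightarrow> real"
  assumes p: "0 < p" "p \<le> 1" and m: "(1-p)/p < 1"
    and st: "bind_pmf \<pi> (imm_kernel p) = \<pi>" and ir: "integrable (measure_pmf \<pi>) real"
    and f: "\<And>x. \<bar>f x\<bar> \<le> B"
  shows "(\<lambda>n. measure_pmf.expectation (kit (imm_kernel p) n y) f) \<longlonglongrightarrow> measure_pmf.expectation \<pi> f"
proof -
  let ?K = "imm_kernel p" and ?m = "(1-p)/p"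
  let ?E = "measure_pmf.expectation"
  have m0: "0 \<le> ?m" using p by auto
  have B0: "0 \<le> B" using f[of 0] by auto
  have a: "\<bar>?E (kit ?K n 0) f - ?E \<pi> f\<bar> \<le> 2*B*?m^n * ?E \<pi> real" for n
  proof -
    have "?E \<pi> f = ?E (bind_pmf \<pi> (kit ?K n)) f" using kit_stat[OF st, of n] by simp
    also have "\<dots> = ?E \<pi> (\<lambda>w. ?E (kit ?K n w) f)" by (rule exp_bind_pmf[OF f])
    finally have e1: "?E \<pi> f = ?E \<pi> (\<lambda>w. ?E (kit ?K n w) f)" .
    have e2: "?E (kit ?K n 0) f = ?E \<pi> (\<lambda>w. ?E (kit ?K n 0) f)" by (simp add: measure_pmf.prob_space)
    have i1: "integrable (measure_pmf \<pi>) (\<lambda>w. ?E (kit ?K n 0) f)" by (rule bint[where B=B]) (rule abs_exp_le, rule f)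
    have i2: "integrable (measure_pmf \<pi>) (\<lambda>w. ?E (kit ?K n w) f)" by (rule bint[where B=B]) (rule abs_exp_le, rule f)
    have "\<bar>?E (kit ?K n 0) f - ?E \<pi> f\<bar> = \<bar>?E \<pi> (\<lambda>w. ?E (kit ?K n 0) f - ?E (kit ?K n w) f)\<bar>"
      using e1 e2 by (simp add: Bochner_Integration.integral_diff[OF i1 i2])
    also have "\<dots> \<le> ?E \<pi> (\<lambda>w. \<bar>?E (kit ?K n 0) f - ?E (kit ?K n w) f\<bar>)" by (rule integral_abs_bound)
    also have "\<dots> \<le> ?E \<pi> (\<lambda>w. 2*B*?m^n * real w)"
    proof (rule integral_mono)
      show "integrable (measure_pmf \<pi>) (\<lambda>w. \<bar>?E (kit ?K n 0) f - ?E (kit ?K n w) f\<bar>)"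
        using i1 i2 by auto
      show "integrable (measure_pmf \<pi>) (\<lambda>w. 2*B*?m^n * real w)" using ir by auto
      fix w show "\<bar>?E (kit ?K n 0) f - ?E (kit ?K n w) f\<bar> \<le> 2*B*?m^n * real w"
        using couple[OF p f, of n 0 w] by (simp add: abs_minus_commute mult.assoc)
    qed
    also have "\<dots> = 2*B*?m^n * ?E \<pi> real" by simp
    finally show ?thesis .
  qed
  have b: "\<bar>?E (kit ?K n y) f - ?E (kit ?K n 0) f\<bar> \<le> 2*B*?m^n * real y" for n
    using couple[OF p f, of n 0 y] by (simp add: mult.assoc)
  have "(\<lambda>n. ?E (kit ?K n y) f - ?E \<pi> f) \<longlonglongrightarrow> 0"
  proof (rule Lim_null_comparison)
    show "\<forall>\<^sub>F n in sequentially. norm (?E (kit ?K n y) f - ?E \<pi> f) \<le> (2*B*(real y + ?E \<pi> real)) * ?m^n"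
    proof (rule always_eventually, rule allI)
      fix n
      have "norm (?E (kit ?K n y) f - ?E \<pi> f) \<le> \<bar>?E (kit ?K n y) f - ?E (kit ?K n 0) f\<bar> + \<bar>?E (kit ?K n 0) f - ?E \<pi> f\<bar>"
        by simp
      also have "\<dots> \<le> 2*B*?m^n * real y + 2*B*?m^n * ?E \<pi> real" using a[of n] b[of n] by linarith
      finally show "norm (?E (kit ?K n y) f - ?E \<pi> f) \<le> (2*B*(real y + ?E \<pi> real)) * ?m^n"
        by (simp add: algebra_simps)
    qed
    show "(\<lambda>n. (2*B*(real y + ?E \<pi> real)) * ?m^n) \<longlonglongrightarrow> 0"
      by (rule tendsto_mult_right_zero, rule LIMSEQ_power_zero) (use m m0 in auto)
  qed
  then show ?thesis by (rule LIM_zero_cancel)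
qed

lemma stat_unique:
  assumes p: "0 < p" "p \<le> 1" and m: "(1-p)/p < 1"
    and st: "bind_pmf \<pi> (imm_kernel p) = \<pi>" and ir: "integrable (measure_pmf \<pi>) real"
    and st': "bind_pmf \<pi>' (imm_kernel p) = \<pi>'"
  shows "\<pi>' = \<pi>"
proof (rule pmf_eqI)
  fix k
  let ?K = "imm_kernel p"
  let ?E = "measure_pmf.expectation"
  define f :: "nat \<Rightarrow> real" where "f = indicator {k}"
  have f: "\<bar>f x\<bar> \<le> 1" for x by (simp add: f_def indicator_def)
  have c: "?E \<pi>' f = ?E \<pi>' (\<lambda>w. ?E (kit ?K n w) f)" for n
  proof -
    have "?E \<pi>' f = ?E (bind_pmf \<pi>' (kit ?K n)) f" using kit_stat[OF st', of n] by simp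
    also have "\<dots> = ?E \<pi>' (\<lambda>w. ?E (kit ?K n w) f)" by (rule exp_bind_pmf[OF f])
    finally show ?thesis .
  qed
  have "(\<lambda>n. ?E \<pi>' (\<lambda>w. ?E (kit ?K n w) f)) \<longlonglongrightarrow> ?E \<pi>' (\<lambda>w. ?E \<pi> f)"
  proof (rule integral_dominated_convergence[where w="\<lambda>_. 1"])
    show "AE x in measure_pmf \<pi>'. (\<lambda>n. ?E (kit ?K n x) f) \<longlonglongrightarrow> ?E \<pi> f"
      using conv_start[OF p m st ir f] by simp
    show "AE x in measure_pmf \<pi>'. norm (?E (kit ?K n x) f) \<le> 1" for n
      using abs_exp_le[where f=f and B=1, OF f] by simp
  qed auto
  then have "(\<lambda>n. ?E \<pi>' f) \<longlonglongrightarrow> ?E \<pi> f" using c by (simp add: measure_pmf.prob_space)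
  then have "?E \<pi>' f = ?E \<pi> f" using LIMSEQ_const_iff by blast
  then show "pmf \<pi>' k = pmf \<pi> k" by (simp add: f_def measure_pmf_single)
qed

lemma exp_sums:
  fixes g :: "nat \<Rightarrow> real"
  assumes "summable (\<lambda>n. norm (pmf M n * g n))"
  shows "(\<lambda>n. pmf M n * g n) sums measure_pmf.expectation M g"
proof -
  have "measure_pmf.expectation M g = (\<integral>n. pmf M n * g n \<partial>count_space UNIV)"
    unfolding measure_pmf_eq_density by (subst integral_density) auto
  moreover have "integrable (count_space UNIV) (\<lambda>n. pmf M n * g n)"
    using assms unfolding integrable_count_space_nat_iff by simp
  ultimately show ?thesis
    by (simp add: integral_count_space_nat summable_norm_cancel[OF assms] summable_sums)
qed

lemma negbin_series:
  fixes q :: real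
  assumes "0 \<le> q" "q < 1"
  shows "(\<lambda>w. real ((n+w) choose n) * q^w) sums (1/(1-q)^(Suc n))"
proof -
  have "(\<lambda>w. ((-(real n + 1)) gchoose w) * (-q)^w) sums (1 + -q) powr (-(real n+1))"
    by (rule gen_binomial_real) (use assms in auto)
  moreover have "((-(real n + 1)) gchoose w) * (-q)^w = real ((n+w) choose n) * q^w" for w
  proof -
    have "((-(real n + 1)) gchoose w) = (-1)^w * ((real n + 1 + real w - 1) gchoose w)"
      by (rule gbinomial_minus)
    also have "real n + 1 + real w - 1 = real (n + w)" by simp
    also have "(real (n+w) gchoose w) = real ((n+w) choose w)" by (simp add: binomial_gbinomial)
    also have "(n+w) choose w = (n+w) choose n" using binomial_symmetric[of w "n+w"] by simp
    finally have "((-(real n + 1)) gchoose w) = (-1)^w * real ((n+w) choose n)" .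
    moreover have "(-q)^w = (-1)^w * q^w" by (rule power_minus)
    moreover have "(-1::real)^w * (-1)^w = 1" by (induction w) auto
    ultimately show ?thesis by (metis (no_types, lifting) mult.assoc mult.left_commute mult_1)
  qed
  moreover have "(1 + -q) powr (-(real n+1)) = 1/(1-q)^(Suc n)"
  proof -
    have "(1 + -q) powr (-(real n+1)) = (1-q) powr (- real (Suc n))" by (simp add: add.commute)
    also have "\<dots> = inverse ((1-q) powr (real (Suc n)))" by (rule powr_minus)
    also have "(1-q) powr (real (Suc n)) = (1-q)^(Suc n)"
      using assms by (intro powr_realpow) auto
    finally show ?thesis by (simp add: divide_inverse)
  qed
  ultimately show ?thesis by simp
qed

lemma pmf_imm:
  assumes "0 < p" "p \<le> 1"
  shows "pmf (imm_kernel p w) n = real ((n+w) choose n) * p^(Suc w) * (1-p)^n"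
  using pmf_neg_binomial[of p "Suc w" n] assms by (simp add: imm_kernel_def iid_nb)

lemma stat_geo:
  assumes p: "1/2 < p" "p < 1"
  shows "bind_pmf (geometric_pmf ((2*p-1)/p)) (imm_kernel p) = geometric_pmf ((2*p-1)/p)"
proof (rule pmf_eqI)
  fix n
  define r where "r = (2*p-1)/p"
  have r: "0 < r" "r \<le> 1" using p by (auto simp: r_def field_simps)
  have hr: "1 - r = (1-p)/p" using p by (simp add: r_def field_simps)
  have p0: "0 < p" "p \<le> 1" using p by auto
  have t: "pmf (geometric_pmf r) w * pmf (imm_kernel p w) n = (r*p*(1-p)^n) * (real ((n+w) choose n) * (1-p)^w)" for w
  proof -
    have e0: "((1-p)/p)^w * p^w = (1-p)^w" using p0 by (simp add: power_divide)
    have e1: "((1-p)/p)^w * p^(Suc w) = p*(1-p)^w"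
    proof -
      have "((1-p)/p)^w * p^(Suc w) = p * (((1-p)/p)^w * p^w)" by (simp add: algebra_simps)
      then show ?thesis using e0 by simp
    qed
    have "pmf (geometric_pmf r) w * pmf (imm_kernel p w) n = r * real ((n+w) choose n) * (1-p)^n * (((1-p)/p)^w * p^(Suc w))"
      using r p0 by (simp add: pmf_imm hr mult_ac)
    also have "\<dots> = (r*p*(1-p)^n) * (real ((n+w) choose n) * (1-p)^w)" by (simp only: e1) (simp add: mult_ac)
    finally show ?thesis .
  qed
  have s: "(\<lambda>w. pmf (geometric_pmf r) w * pmf (imm_kernel p w) n) sums ((r*p*(1-p)^n) * (1/(1-(1-p))^(Suc n)))"
    unfolding t by (rule sums_mult, rule negbin_series) (use p in auto)
  have "pmf (bind_pmf (geometric_pmf r) (imm_kernel p)) n = measure_pmf.expectation (geometric_pmf r) (\<lambda>w. pmf (imm_kernel p w) n)"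
    by (simp add: pmf_bind)
  also have "\<dots> = (r*p*(1-p)^n) * (1/(1-(1-p))^(Suc n))"
  proof -
    have "summable (\<lambda>w. norm (pmf (geometric_pmf r) w * pmf (imm_kernel p w) n))"
      using s by (simp add: sums_iff)
    from exp_sums[OF this] s show ?thesis using sums_unique2 by blast
  qed
  also have "\<dots> = r * ((1-p)^n / p^n)" using p0 by (simp add: field_simps)
  also have "\<dots> = (1-r)^n * r" by (simp add: hr power_divide)
  also have "\<dots> = pmf (geometric_pmf r) n" using r by simp
  finally show "pmf (bind_pmf (geometric_pmf ((2*p-1)/p)) (imm_kernel p)) n = pmf (geometric_pmf ((2*p-1)/p)) n"
    by (simp add: r_def)
qed

lemma bounded_range_bound:
  fixes f :: "'a \<Rightarrow> real"
  assumes "bounded (range f)"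
  obtains B where "\<And>x. \<bar>f x\<bar> \<le> B"
proof -
  from assms obtain a where "\<forall>x\<in>range f. norm x \<le> a" unfolding Elementary_Metric_Spaces.bounded_iff by blast
  then show thesis using that[of a] by auto
qed

lemma bound_bounded_range:
  fixes f :: "'a \<Rightarrow> real"
  assumes "\<And>x. \<bar>f x\<bar> \<le> B"
  shows "bounded (range f)"
  unfolding Elementary_Metric_Spaces.bounded_iff using assms by auto

lemma conv_map:
  fixes g :: "'a \<Rightarrow> 'b" and X :: "nat \<Rightarrow> 'a pmf"
  assumes "conv_distr X Y"
  shows "conv_distr (\<lambda>N. map_pmf g (X N)) (map_pmf g Y)"
  unfolding conv_distr_def
proof (intro allI impI)
  fix f :: "'b \<Rightarrow> real" assume bf: "bounded (range f)"
  obtain B where B: "\<And>x. \<bar>f x\<bar> \<le> B" using bounded_range_bound[OF bf] by blast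
  have "bounded (range (\<lambda>x. f (g x)))" by (rule bound_bounded_range[of _ B]) (rule B)
  then show "(\<lambda>N. measure_pmf.expectation (map_pmf g (X N)) f) \<longlonglongrightarrow> measure_pmf.expectation (map_pmf g Y) f"
    using assms unfolding conv_distr_def by simp
qed

lemma conv_bind:
  fixes h :: "'a \<Rightarrow> 'b pmf" and X :: "nat \<Rightarrow> 'a pmf"
  assumes "conv_distr X Y"
  shows "conv_distr (\<lambda>N. bind_pmf (X N) h) (bind_pmf Y h)"
  unfolding conv_distr_def
proof (intro allI impI)
  fix f :: "'b \<Rightarrow> real" assume bf: "bounded (range f)"
  obtain B where B: "\<And>x. \<bar>f x\<bar> \<le> B" using bounded_range_bound[OF bf] by blast
  have "bounded (range (\<lambda>x. measure_pmf.expectation (h x) f))"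
    by (rule bound_bounded_range[of _ B]) (rule abs_exp_le, rule B)
  then show "(\<lambda>N. measure_pmf.expectation (bind_pmf (X N) h) f) \<longlonglongrightarrow> measure_pmf.expectation (bind_pmf Y h) f"
    using assms unfolding conv_distr_def by (simp add: exp_bind_pmf[OF B])
qed

lemma conv_ev:
  fixes X :: "nat \<Rightarrow> 'a pmf"
  assumes "conv_distr X Y" "eventually (\<lambda>N. X N = X' N) sequentially"
  shows "conv_distr X' Y"
  unfolding conv_distr_def
proof (intro allI impI)
  fix f :: "'a \<Rightarrow> real" assume "bounded (range f)"
  then have "(\<lambda>N. measure_pmf.expectation (X N) f) \<longlonglongrightarrow> measure_pmf.expectation Y f"
    using assms(1) unfolding conv_distr_def by simp
  moreover have "eventually (\<lambda>N. measure_pmf.expectation (X N) f = measure_pmf.expectation (X' N) f) sequentially"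
    using assms(2) by eventually_elim simp
  ultimately show "(\<lambda>N. measure_pmf.expectation (X' N) f) \<longlonglongrightarrow> measure_pmf.expectation Y f"
    by (rule Lim_transform_eventually)
qed

lemma conv_comp:
  fixes X :: "nat \<Rightarrow> 'a pmf"
  assumes "conv_distr X Y" "filterlim g sequentially sequentially"
  shows "conv_distr (\<lambda>N. X (g N)) Y"
  unfolding conv_distr_def
proof (intro allI impI)
  fix f :: "'a \<Rightarrow> real" assume "bounded (range f)"
  then have "(\<lambda>N. measure_pmf.expectation (X N) f) \<longlonglongrightarrow> measure_pmf.expectation Y f"
    using assms(1) unfolding conv_distr_def by simp
  from filterlim_compose[OF this assms(2)]
  show "(\<lambda>N. measure_pmf.expectation (X (g N)) f) \<longlonglongrightarrow> measure_pmf.expectation Y f" .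
qed

lemma floor_lim:
  fixes c :: real
  assumes "0 < c"
  shows "filterlim (\<lambda>N. nat \<lfloor>c * real N\<rfloor>) sequentially sequentially"
  unfolding filterlim_at_top
proof
  fix Z :: nat
  show "\<forall>\<^sub>F N in sequentially. Z \<le> nat \<lfloor>c * real N\<rfloor>"
    unfolding eventually_sequentially
  proof (intro exI allI impI)
    fix N assume N: "nat \<lceil>real Z / c\<rceil> \<le> N"
    have "real Z / c \<le> real N" using N by linarith
    then have "real Z \<le> c * real N" using assms by (simp add: field_simps)
    then show "Z \<le> nat \<lfloor>c * real N\<rfloor>" by linarith
  qed
qed

lemma chain_cong:
  "(\<And>j. j < n \<Longrightarrow> K j = K' j) \<Longrightarrow> chain_path i K n = chain_path i K' n"
  by (induction n) auto

lemma chain_bind: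
  "chain_path (bind_pmf \<mu> f) K n = bind_pmf \<mu> (\<lambda>x. chain_path (f x) K n)"
  by (induction n) (simp_all add: map_bind_pmf bind_assoc_pmf)

lemma chain_len:
  "xs \<in> set_pmf (chain_path i K n) \<Longrightarrow> length xs = Suc n"
  by (induction n arbitrary: xs) auto

lemma chain_last:
  "map_pmf last (chain_path i (\<lambda>_. K) n) = bind_pmf i (kit K n)"
proof (induction n)
  case 0
  then show ?case by (simp add: map_pmf_comp kit_fun bind_return_pmf' map_pmf_ident)
next
  case (Suc n)
  have "map_pmf last (chain_path i (\<lambda>_. K) (Suc n)) = bind_pmf (map_pmf last (chain_path i (\<lambda>_. K) n)) K"
    by (simp add: map_bind_pmf map_pmf_comp bind_map_pmf)
  also have "\<dots> = bind_pmf i (kit K (Suc n))"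
  proof -
    have e: "kit K (Suc n) = (\<lambda>x. bind_pmf (kit K n x) K)" by (rule ext, rule kit_Suc')
    show ?thesis using Suc by (simp only: e bind_assoc_pmf)
  qed
  finally show ?case .
qed

lemma chain_drop:
  "map_pmf (drop a) (chain_path i K (a + M)) = chain_path (map_pmf last (chain_path i K a)) (\<lambda>j. K (a + j)) M"
proof (induction M)
  case 0
  have "map_pmf (drop a) (chain_path i K a) = map_pmf (\<lambda>xs. [last xs]) (chain_path i K a)"
  proof (rule map_pmf_cong[OF refl])
    fix xs assume "xs \<in> set_pmf (chain_path i K a)"
    then have "length xs = Suc a" by (rule chain_len)
    then show "drop a xs = [last xs]"
      by (cases xs rule: rev_cases) auto
  qed
  then show ?case by (simp add: map_pmf_comp)
next
  case (Suc M)
  have "map_pmf (drop a) (chain_path i K (a + Suc M))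
     = bind_pmf (chain_path i K (a + M)) (\<lambda>xs. map_pmf (\<lambda>y. drop a xs @ [y]) (K (a + M) (last (drop a xs))))"
    unfolding add_Suc_right chain_path.simps map_bind_pmf map_pmf_comp
  proof (rule bind_pmf_cong[OF refl])
    fix xs assume "xs \<in> set_pmf (chain_path i K (a + M))"
    then have l: "length xs = Suc (a + M)" by (rule chain_len)
    then have "last (drop a xs) = last xs" by (simp add: last_drop)
    moreover have "drop a (xs @ [y]) = drop a xs @ [y]" for y using l by simp
    ultimately show "map_pmf (\<lambda>x. drop a (xs @ [x])) (K (a + M) (last xs)) = map_pmf (\<lambda>y. drop a xs @ [y]) (K (a + M) (last (drop a xs)))"
      by simp
  qed
  also have "\<dots> = bind_pmf (map_pmf (drop a) (chain_path i K (a + M))) (\<lambda>ys. map_pmf (\<lambda>y. ys @ [y]) (K (a + M) (last ys)))"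
    by (simp add: bind_map_pmf)
  also have "\<dots> = chain_path (map_pmf last (chain_path i K a)) (\<lambda>j. K (a + j)) (Suc M)"
    using Suc by simp
  finally show ?case .
qed

lemma avoid_bnd: "0 \<le> avoid K x n w \<and> avoid K x n w \<le> 1"
proof (induction n arbitrary: w)
  case 0 then show ?case by simp
next
  case (Suc n)
  let ?g = "\<lambda>y. if y = x then 0 else avoid K x n y"
  have g: "0 \<le> ?g y \<and> ?g y \<le> 1" for y using Suc by auto
  have i: "integrable (measure_pmf (K w)) ?g" by (rule bint[where B=1]) (use g in \<open>auto simp: abs_le_iff\<close>)
  have "0 \<le> measure_pmf.expectation (K w) ?g" by (rule Bochner_Integration.integral_nonneg) (use g in auto)
  moreover have "measure_pmf.expectation (K w) ?g \<le> 1" by (rule measure_pmf.integral_le_const[OF i]) (use g in auto)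
  ultimately show ?case by simp
qed

lemma posrec:
  assumes st: "bind_pmf \<pi> K = \<pi>" and pos: "\<And>x. 0 < pmf \<pi> x"
  shows "positive_recurrent K"
  unfolding positive_recurrent_def
proof
  fix x
  let ?E = "measure_pmf.expectation"
  define c where "c n = ?E \<pi> (avoid K x n)" for n
  define g where "g n = (\<lambda>y. if y = x then 0 else avoid K x n y)" for n
  have gb: "\<bar>g n y\<bar> \<le> 1" for n y using avoid_bnd[of K x n y] by (auto simp: g_def)
  have ab: "\<bar>avoid K x n y\<bar> \<le> 1" for n y using avoid_bnd[of K x n y] by auto
  have key: "pmf \<pi> x * avoid K x n x = c n - c (Suc n)" for n
  proof -
    have e: "avoid K x (Suc n) = (\<lambda>w. ?E (K w) (g n))" by (rule ext) (simp add: g_def)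
    have "c (Suc n) = ?E \<pi> (\<lambda>w. ?E (K w) (g n))" by (simp only: c_def e)
    also have "\<dots> = ?E (bind_pmf \<pi> K) (g n)" by (rule exp_bind_pmf[symmetric, OF gb])
    also have "\<dots> = ?E \<pi> (g n)" using st by simp
    finally have c1: "c (Suc n) = ?E \<pi> (g n)" .
    have "c n = ?E \<pi> (\<lambda>w. avoid K x n x * indicator {x} w + g n w)"
      unfolding c_def by (rule Bochner_Integration.integral_cong) (auto simp: g_def indicator_def)
    also have "\<dots> = ?E \<pi> (\<lambda>w. avoid K x n x * indicator {x} w) + ?E \<pi> (g n)"
      by (rule Bochner_Integration.integral_add) (rule bint[where B=1], use ab in \<open>auto simp: indicator_def abs_mult\<close>, rule bint[where B=1], rule gb)
    also have "?E \<pi> (\<lambda>w. avoid K x n x * indicator {x} w) = avoid K x n x * pmf \<pi> x"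
      by (simp add: measure_pmf_single)
    finally show ?thesis using c1 by simp
  qed
  have e0: "avoid K x 0 = (\<lambda>_. 1)" by (rule ext) simp
  have c0: "c 0 = 1" by (simp add: c_def e0 measure_pmf.prob_space)
  have cn: "0 \<le> c n" for n unfolding c_def by (rule Bochner_Integration.integral_nonneg) (use avoid_bnd[of K x n] in blast)
  have "summable (\<lambda>n. pmf \<pi> x * avoid K x n x)"
  proof (rule summableI_nonneg_bounded[where x=1])
    show "0 \<le> pmf \<pi> x * avoid K x n x" for n using avoid_bnd[of K x n x] by simp
    show "sum (\<lambda>n. pmf \<pi> x * avoid K x n x) {..<n} \<le> 1" for n
    proof -
      have "sum (\<lambda>n. pmf \<pi> x * avoid K x n x) {..<n} = (\<Sum>i<n. c i - c (Suc i))" using key by simp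
      also have "\<dots> = c 0 - c n" using sum_lessThan_telescope'[of c n] by simp
      finally show ?thesis using c0 cn[of n] by simp
    qed
  qed
  then show "summable (\<lambda>n. avoid K x n x)"
    using summable_mult[of "\<lambda>n. pmf \<pi> x * avoid K x n x" "1 / pmf \<pi> x"] pos[of x] by simp
qed

lemma pgf_geo:
  assumes r: "0 < r" "r \<le> 1" and s: "abs ((1-r) * s) < 1"
  shows "pgf (geometric_pmf r) s = r / (1 - (1-r) * s)"
proof -
  have "(\<lambda>k. r * ((1-r) * s)^k) sums (r * (1 / (1 - (1-r) * s)))"
    by (rule sums_mult, rule geometric_sums) (use s in auto)
  moreover have "pmf (geometric_pmf r) k * s^k = r * ((1-r) * s)^k" for k
    using r by (simp add: power_mult_distrib)
  ultimately show ?thesis unfolding pgf_def by (simp add: sums_iff)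
qed

lemma exp_geo_pow:
  assumes p: "0 < p" "p \<le> 1" and s: "abs ((1-p) * s) < 1"
  shows "measure_pmf.expectation (geometric_pmf p) (\<lambda>d. s ^ d) = p / (1 - (1-p) * s)"
proof -
  have eq: "pmf (geometric_pmf p) d * s^d = p * ((1-p) * s)^d" for d
    using p by (simp add: power_mult_distrib)
  have sm: "(\<lambda>k. p * ((1-p) * s)^k) sums (p * (1 / (1 - (1-p) * s)))"
    by (rule sums_mult, rule geometric_sums) (use s in auto)
  have "summable (\<lambda>d. norm (p * ((1-p) * s)^d))"
    using summable_mult[OF summable_geometric[of "abs ((1-p) * s)"], of p] s p
    by (simp add: abs_mult power_abs)
  then have "(\<lambda>d. pmf (geometric_pmf p) d * s^d) sums measure_pmf.expectation (geometric_pmf p) (\<lambda>d. s ^ d)"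
    by (intro exp_sums) (simp add: eq)
  then show ?thesis using sm unfolding eq by (simp add: sums_iff)
qed

lemma proj_back:
  assumes "length xs = Suc (a + M)"
  shows "map (\<lambda>k. xs ! (a + M - k)) [0..<M+1] = rev (drop a xs)"
proof (rule nth_equalityI)
  show "length (map (\<lambda>k. xs ! (a + M - k)) [0..<M+1]) = length (rev (drop a xs))" using assms by simp
  fix i assume "i < length (map (\<lambda>k. xs ! (a + M - k)) [0..<M+1])"
  then have i: "i < M + 1" by simp
  then show "map (\<lambda>k. xs ! (a + M - k)) [0..<M+1] ! i = rev (drop a xs) ! i"
    using assms by (simp add: rev_nth nth_drop nth_map_upt del: upt.simps)
qed

lemma proj_fwd:
  assumes "length xs = Suc (n + M)"
  shows "map (\<lambda>k. xs ! (n + k)) [0..<M+1] = drop n xs"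
proof (rule nth_equalityI)
  show "length (map (\<lambda>k. xs ! (n + k)) [0..<M+1]) = length (drop n xs)" using assms by simp
  fix i assume "i < length (map (\<lambda>k. xs ! (n + k)) [0..<M+1])"
  then show "map (\<lambda>k. xs ! (n + k)) [0..<M+1] ! i = drop n xs ! i"
    using assms by (simp add: nth_drop nth_map_upt del: upt.simps)
qed

theorem proposition3p5:
  fixes p q \<alpha> :: real
  assumes "0 < q" "q < p" "p + q = 1" "0 < \<alpha>" "\<alpha> < 1"
  shows "positive_recurrent (imm_kernel p)
    \<and> (\<exists>!\<pi>. stationary (imm_kernel p) \<pi>)
    \<and> (\<forall>\<pi>. stationary (imm_kernel p) \<pi> \<longrightarrow>
         (\<forall>s. \<bar>s\<bar> \<le> 1 \<longrightarrow>
            measure_pmf.expectation (geometric_pmf p) (\<lambda>d. s ^ d) = p / (1 - q * s)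
          \<and> pgf \<pi> s = pgf \<pi> (p / (1 - q * s)) * (p / (1 - q * s)))
       \<and> conv_distr (\<lambda>N. map_pmf (\<lambda>xs. xs ! nat \<lfloor>(1 - \<alpha>) * real N\<rfloor>)
                          (eta_path p \<alpha> N (nat \<lfloor>(1 - \<alpha>) * real N\<rfloor>))) \<pi>
       \<and> (\<forall>M::nat. M \<ge> 1 \<longrightarrow>
            conv_distr (\<lambda>N. map_pmf (\<lambda>xs. map (\<lambda>k. xs ! (nat \<lfloor>(1 - \<alpha>) * real N\<rfloor> - k)) [0..<M+1])
                               (eta_path p \<alpha> N (nat \<lfloor>(1 - \<alpha>) * real N\<rfloor>)))
                       (map_pmf rev (chain_path \<pi> (\<lambda>_. imm_kernel p) M))
          \<and> conv_distr (\<lambda>N. map_pmf (\<lambda>xs. map (\<lambda>k. xs ! (nat \<lfloor>(1 - \<alpha>) * real N\<rfloor> + k)) [0..<M+1])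
                               (eta_path p \<alpha> N (nat \<lfloor>(1 - \<alpha>) * real N\<rfloor> + M)))
                       (chain_path \<pi> (\<lambda>_. gw_kernel p) M)))"
proof -
  have p: "1/2 < p" "p < 1" using assms by auto
  have p0: "0 < p" "p \<le> 1" using p by auto
  have hq: "q = 1 - p" using assms by simp
  define r where "r = (2*p-1)/p"
  have r: "0 < r" "r \<le> 1" "r < 1" using p by (auto simp: r_def field_simps)
  have hr: "1 - r = (1-p)/p" using p by (simp add: r_def field_simps)
  define \<pi>0 where "\<pi>0 = geometric_pmf r"
  let ?K = "imm_kernel p" and ?G = "gw_kernel p"
  have m: "(1-p)/p < 1" using p by (simp add: field_simps)
  have st: "bind_pmf \<pi>0 ?K = \<pi>0" unfolding \<pi>0_def r_def by (rule stat_geo[OF p])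
  have ir: "integrable (measure_pmf \<pi>0) real" unfolding \<pi>0_def
    by (rule integrable_real_geometric_pmf) (use r in auto)
  have uniq: "\<pi> = \<pi>0" if "stationary ?K \<pi>" for \<pi>
    by (rule stat_unique[OF p0 m st ir]) (use that in \<open>simp add: stationary_def\<close>)
  have pos: "0 < pmf \<pi>0 x" for x using r by (simp add: \<pi>0_def)
  have PR: "positive_recurrent ?K" by (rule posrec[OF st pos])
  have EX: "\<exists>!\<pi>. stationary ?K \<pi>"
  proof (rule ex1I[of _ \<pi>0])
    show "stationary ?K \<pi>0" using st by (simp add: stationary_def)
    fix \<pi> assume "stationary ?K \<pi>" then show "\<pi> = \<pi>0" by (rule uniq)
  qed
  have conv0: "conv_distr (\<lambda>n. kit ?K n 0) \<pi>0"
    unfolding conv_distr_def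
  proof (intro allI impI)
    fix f :: "nat \<Rightarrow> real" assume bf: "bounded (range f)"
    obtain B where B: "\<And>x. \<bar>f x\<bar> \<le> B" using bounded_range_bound[OF bf] by blast
    show "(\<lambda>n. measure_pmf.expectation (kit ?K n 0) f) \<longlonglongrightarrow> measure_pmf.expectation \<pi>0 f"
      by (rule conv_start[OF p0 m st ir B])
  qed
  define n where "n N = nat \<lfloor>(1 - \<alpha>) * real N\<rfloor>" for N
  have nlim: "filterlim n sequentially sequentially"
    unfolding n_def by (rule floor_lim) (use assms in auto)
  have CP: "eta_path p \<alpha> N (n N) = chain_path (return_pmf 0) (\<lambda>_. ?K) (n N)" for N
    unfolding eta_path_def n_def[symmetric] by (rule chain_cong) auto
  have ret: "chain_path \<mu> K M = bind_pmf \<mu> (\<lambda>x. chain_path (return_pmf x) K M)" for \<mu> :: "nat pmf" and K M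
    using chain_bind[of \<mu> return_pmf K M] by (simp add: bind_return_pmf')
  have lastK: "map_pmf last (chain_path (return_pmf 0) (\<lambda>_. ?K) a) = kit ?K a 0" for a
    by (simp add: chain_last bind_return_pmf)
  have single: "conv_distr (\<lambda>N. map_pmf (\<lambda>xs. xs ! n N) (eta_path p \<alpha> N (n N))) \<pi>0"
  proof -
    have "map_pmf (\<lambda>xs. xs ! n N) (eta_path p \<alpha> N (n N)) = kit ?K (n N) 0" for N
    proof -
      have "map_pmf (\<lambda>xs. xs ! n N) (eta_path p \<alpha> N (n N)) = map_pmf last (chain_path (return_pmf 0) (\<lambda>_. ?K) (n N))"
        unfolding CP
      proof (rule map_pmf_cong[OF refl])
        fix xs assume "xs \<in> set_pmf (chain_path (return_pmf 0) (\<lambda>_. ?K) (n N))"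
        then have "length xs = Suc (n N)" by (rule chain_len)
        then show "xs ! n N = last xs" by (metis diff_Suc_1 last_conv_nth length_0_conv nat.simps(3))
      qed
      then show ?thesis using lastK by simp
    qed
    then show ?thesis using conv_comp[OF conv0 nlim] by simp
  qed
  have bwd: "conv_distr (\<lambda>N. map_pmf (\<lambda>xs. map (\<lambda>k. xs ! (n N - k)) [0..<M+1]) (eta_path p \<alpha> N (n N)))
                       (map_pmf rev (chain_path \<pi>0 (\<lambda>_. ?K) M))" for M
  proof -
    let ?h = "\<lambda>x. chain_path (return_pmf x) (\<lambda>_. ?K) M"
    have lim2: "filterlim (\<lambda>N. n N - M) sequentially sequentially"
      by (rule filterlim_compose[OF filterlim_minus_const_nat_at_top nlim])
    have c1: "conv_distr (\<lambda>N. map_pmf rev (bind_pmf (kit ?K (n N - M) 0) ?h)) (map_pmf rev (bind_pmf \<pi>0 ?h))"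
      by (rule conv_map, rule conv_bind, rule conv_comp[OF conv0 lim2])
    have ev: "eventually (\<lambda>N. M \<le> n N) sequentially"
      using nlim unfolding filterlim_at_top by blast
    have "eventually (\<lambda>N. map_pmf rev (bind_pmf (kit ?K (n N - M) 0) ?h)
             = map_pmf (\<lambda>xs. map (\<lambda>k. xs ! (n N - k)) [0..<M+1]) (eta_path p \<alpha> N (n N))) sequentially"
      using ev
    proof eventually_elim
      case (elim N)
      define a where "a = n N - M"
      have na: "n N = a + M" using elim by (simp add: a_def)
      have "map_pmf (\<lambda>xs. map (\<lambda>k. xs ! (n N - k)) [0..<M+1]) (eta_path p \<alpha> N (n N))
          = map_pmf (\<lambda>xs. rev (drop a xs)) (chain_path (return_pmf 0) (\<lambda>_. ?K) (a + M))"
        unfolding CP unfolding na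
      proof (rule map_pmf_cong[OF refl])
        fix xs assume "xs \<in> set_pmf (chain_path (return_pmf 0) (\<lambda>_. ?K) (a + M))"
        then have "length xs = Suc (a + M)" by (rule chain_len)
        then show "map (\<lambda>k. xs ! (a + M - k)) [0..<M+1] = rev (drop a xs)" by (rule proj_back)
      qed
      also have "\<dots> = map_pmf rev (map_pmf (drop a) (chain_path (return_pmf 0) (\<lambda>_. ?K) (a + M)))"
        by (simp add: map_pmf_comp)
      also have "\<dots> = map_pmf rev (chain_path (kit ?K a 0) (\<lambda>_. ?K) M)"
        by (simp add: chain_drop lastK)
      also have "\<dots> = map_pmf rev (bind_pmf (kit ?K (n N - M) 0) ?h)"
        by (simp add: a_def ret[of "kit ?K (n N - M) 0"])
      finally show ?case by simp
    qed
    from conv_ev[OF c1 this] show ?thesis using ret[of \<pi>0] by simp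
  qed
  have fwd: "conv_distr (\<lambda>N. map_pmf (\<lambda>xs. map (\<lambda>k. xs ! (n N + k)) [0..<M+1]) (eta_path p \<alpha> N (n N + M)))
                       (chain_path \<pi>0 (\<lambda>_. ?G) M)" for M
  proof -
    let ?h = "\<lambda>x. chain_path (return_pmf x) (\<lambda>_. ?G) M"
    have c1: "conv_distr (\<lambda>N. bind_pmf (kit ?K (n N) 0) ?h) (bind_pmf \<pi>0 ?h)"
      by (rule conv_bind, rule conv_comp[OF conv0 nlim])
    have "bind_pmf (kit ?K (n N) 0) ?h
             = map_pmf (\<lambda>xs. map (\<lambda>k. xs ! (n N + k)) [0..<M+1]) (eta_path p \<alpha> N (n N + M))" for N
    proof -
      let ?KK = "\<lambda>j. if j < n N then ?K else ?G"
      have ep: "eta_path p \<alpha> N (n N + M) = chain_path (return_pmf 0) ?KK (n N + M)"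
        unfolding eta_path_def n_def ..
      have "map_pmf (\<lambda>xs. map (\<lambda>k. xs ! (n N + k)) [0..<M+1]) (eta_path p \<alpha> N (n N + M))
          = map_pmf (drop (n N)) (chain_path (return_pmf 0) ?KK (n N + M))"
        unfolding ep
      proof (rule map_pmf_cong[OF refl])
        fix xs assume "xs \<in> set_pmf (chain_path (return_pmf 0) ?KK (n N + M))"
        then have "length xs = Suc (n N + M)" by (rule chain_len)
        then show "map (\<lambda>k. xs ! (n N + k)) [0..<M+1] = drop (n N) xs" by (rule proj_fwd)
      qed
      also have "\<dots> = chain_path (map_pmf last (chain_path (return_pmf 0) ?KK (n N))) (\<lambda>j. ?KK (n N + j)) M"
        by (rule chain_drop)
      also have "chain_path (return_pmf 0) ?KK (n N) = chain_path (return_pmf 0) (\<lambda>_. ?K) (n N)"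
        by (rule chain_cong) auto
      also have "(\<lambda>j. ?KK (n N + j)) = (\<lambda>_. ?G)" by auto
      finally show ?thesis by (simp add: lastK ret[of "kit ?K (n N) 0"])
    qed
    then show ?thesis using c1 ret[of \<pi>0] by simp
  qed
  have pgfs: "measure_pmf.expectation (geometric_pmf p) (\<lambda>d. s ^ d) = p / (1 - q * s)
          \<and> pgf \<pi>0 s = pgf \<pi>0 (p / (1 - q * s)) * (p / (1 - q * s))" if s: "\<bar>s\<bar> \<le> 1" for s
  proof
    have a1: "abs ((1-p) * s) < 1"
    proof -
      have "abs ((1-p) * s) = (1-p) * \<bar>s\<bar>" using p by (simp add: abs_mult)
      also have "\<dots> \<le> 1 - p" using p s by (simp add: mult_left_le)
      finally show ?thesis using p by simp
    qed
    show "measure_pmf.expectation (geometric_pmf p) (\<lambda>d. s ^ d) = p / (1 - q * s)"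
      using exp_geo_pow[OF p0 a1] by (simp add: hq)
    define phi where "phi = p / (1 - q * s)"
    have qs: "q * s \<le> q" using s assms(1) by (simp add: mult_left_le abs_le_iff)
    have d1: "0 < 1 - q * s" using qs assms by linarith
    have pq: "p \<le> 1 - q * s" using qs hq by linarith
    have ph0: "0 < phi" "phi \<le> 1" using d1 pq p0 by (auto simp: phi_def divide_le_eq_1)
    have a2: "abs ((1-r) * s) < 1"
    proof -
      have "abs ((1-r) * s) = (1-r) * \<bar>s\<bar>" using r by (simp add: abs_mult)
      also have "\<dots> \<le> 1 - r" using r s by (simp add: mult_left_le)
      finally show ?thesis using r by simp
    qed
    have a3: "abs ((1-r) * phi) < 1"
    proof -
      have "abs ((1-r) * phi) = (1-r) * phi" using r ph0 by (simp add: abs_mult)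
      also have "\<dots> \<le> 1 - r" using r ph0 by (simp add: mult_left_le)
      finally show ?thesis using r by simp
    qed
    have e1: "pgf \<pi>0 s = r / (1 - (1-r) * s)" unfolding \<pi>0_def by (rule pgf_geo[OF r(1,2) a2])
    have e2: "pgf \<pi>0 phi = r / (1 - (1-r) * phi)" unfolding \<pi>0_def by (rule pgf_geo[OF r(1,2) a3])
    have d2: "0 < p - q * s" using qs assms by linarith
    have e3: "1 - (1-r) * s = (p - q * s)/p" unfolding hr hq using p0 by (simp add: field_simps)
    have u: "1 - q * s \<noteq> 0" using d1 by simp
    have hr': "1 - r = q / p" using hr hq by simp
    have e4a: "(1-r) * phi = q / (1 - q * s)" unfolding hr' phi_def using p0 by simp
    have e4b: "1 - q / (1 - q * s) = (1 - q * s - q) / (1 - q * s)" using u by (simp add: diff_divide_distrib)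
    have e4: "1 - (1-r) * phi = (p - q * s)/(1 - q * s)" unfolding e4a e4b using assms(3) by (simp add: algebra_simps)
    have "r / (1 - (1-r) * s) = r * p / (p - q * s)" unfolding e3 using p0 d2 by simp
    moreover have "r / (1 - (1-r) * phi) * phi = r * p / (p - q * s)" unfolding e4 unfolding phi_def using d1 d2 by simp
    ultimately have "r / (1 - (1-r) * s) = r / (1 - (1-r) * phi) * phi" by simp
    then show "pgf \<pi>0 s = pgf \<pi>0 (p / (1 - q * s)) * (p / (1 - q * s))"
      using e1 e2 by (simp add: phi_def)
  qed
  show ?thesis
  proof (intro conjI allI impI)
    show "positive_recurrent ?K" by (rule PR)
    show "\<exists>!\<pi>. stationary ?K \<pi>" by (rule EX)
  next
    fix \<pi> s assume a: "stationary ?K \<pi>" "\<bar>s\<bar> \<le> (1::real)"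
    have e: "\<pi> = \<pi>0" using a(1) by (rule uniq)
    show "measure_pmf.expectation (geometric_pmf p) (\<lambda>d. s ^ d) = p / (1 - q * s)"
      "pgf \<pi> s = pgf \<pi> (p / (1 - q * s)) * (p / (1 - q * s))"
      using pgfs[OF a(2)] unfolding e by auto
  next
    fix \<pi> assume a: "stationary ?K \<pi>"
    have e: "\<pi> = \<pi>0" using a by (rule uniq)
    show "conv_distr (\<lambda>N. map_pmf (\<lambda>xs. xs ! nat \<lfloor>(1 - \<alpha>) * real N\<rfloor>)
                          (eta_path p \<alpha> N (nat \<lfloor>(1 - \<alpha>) * real N\<rfloor>))) \<pi>"
      using single unfolding e n_def .
  next
    fix \<pi> and M :: nat assume a: "stationary ?K \<pi>" "1 \<le> M"
    have e: "\<pi> = \<pi>0" using a(1) by (rule uniq)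
    show "conv_distr (\<lambda>N. map_pmf (\<lambda>xs. map (\<lambda>k. xs ! (nat \<lfloor>(1 - \<alpha>) * real N\<rfloor> - k)) [0..<M+1])
                               (eta_path p \<alpha> N (nat \<lfloor>(1 - \<alpha>) * real N\<rfloor>)))
                       (map_pmf rev (chain_path \<pi> (\<lambda>_. imm_kernel p) M))"
      "conv_distr (\<lambda>N. map_pmf (\<lambda>xs. map (\<lambda>k. xs ! (nat \<lfloor>(1 - \<alpha>) * real N\<rfloor> + k)) [0..<M+1])
                               (eta_path p \<alpha> N (nat \<lfloor>(1 - \<alpha>) * real N\<rfloor> + M)))
                       (chain_path \<pi> (\<lambda>_. gw_kernel p) M)"
      using bwd[of M] fwd[of M] unfolding e n_def by simp_all
  qed
qed

end
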